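(* Let $(X,d)$ be a complete metric space and let $G:X\times X\to X$ be a mapping such that (i) $G(x,x)=x$ for all $x\in X$, and (ii) for $x,y\in X$, $G(x,y)=x$ implies $y=x$. Let $T:X\to P_{cl}(X)$ be a multivalued operator with $SFix(T)\neq\emptyset$, let $x^*\in SFix(T)$, and let $T_G(x)=\{G(x,u):u\in T(x)\}$ be the admissible perturbation of $T$ corresponding to $G$. Suppose there exists $k\in(0,1)$ such that $$H(T_G(x),\{x^*\})\le k\,d(x,x^* )\quad\text{for all }x\in X.$$ Then $$H(T_G(Y),\{x^*\})\le k\,H(Y,\{x^*\})\quad\text{for all }Y\in P_{cl}(X).$$
   Context: $P(X)$ denotes the family of nonempty subsets of $X$ and $P_{cl}(X)$ the family of nonempty closed subsets. $SFix(T)=\{x\in X:T(x)=\{x\}\}$. For $A,B\in P(X)$: $D(a,B)=\inf\{d(a,b):b\in B\}$, $e(A,B)=\sup\{D(a,B):a\in A\}$, $H(A,B)=\max\{e(A,B),e(B,A)\}$ (possibly $+\infty$). For $Y\subseteq X$, $T_G(Y)=\bigcup_{y\in Y}T_G(y)$. *)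

theory Defs
  imports "HOL-Analysis.Analysis"
begin

definition gapD :: "'a::metric_space \<Rightarrow> 'a set \<Rightarrow> ereal" where
  "gapD a B = (INF b\<in>B. ereal (dist a b))"

definition excess :: "'a::metric_space set \<Rightarrow> 'a set \<Rightarrow> ereal" where
  "excess A B = (SUP a\<in>A. gapD a B)"

definition hausdorffH :: "'a::metric_space set \<Rightarrow> 'a set \<Rightarrow> ereal" where
  "hausdorffH A B = max (excess A B) (excess B A)"

definition SFix :: "('a \<Rightarrow> 'a set) \<Rightarrow> 'a set" where
  "SFix T = {x. T x = {x}}"

definition perturb :: "('a \<Rightarrow> 'a \<Rightarrow> 'a) \<Rightarrow> ('a \<Rightarrow> 'a set) \<Rightarrow> 'a \<Rightarrow> 'a set" where
  "perturb G T x = {G x u | u. u \<in> T x}"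

definition perturb_set :: "('a \<Rightarrow> 'a \<Rightarrow> 'a) \<Rightarrow> ('a \<Rightarrow> 'a set) \<Rightarrow> 'a set \<Rightarrow> 'a set" where
  "perturb_set G T Y = (\<Union>y\<in>Y. perturb G T y)"

end

theory Submission
  imports Defs
begin

lemma H_single:
  assumes "A \<noteq> {}"
  shows "hausdorffH A {x} = (SUP a\<in>A. ereal (dist a x))"
proof -
  have e1: "excess A {x} = (SUP a\<in>A. ereal (dist a x))"
    by (simp add: excess_def gapD_def)
  have "excess {x} A = (INF a\<in>A. ereal (dist a x))"
    by (simp add: excess_def gapD_def dist_commute)
  also have "\<dots> \<le> (SUP a\<in>A. ereal (dist a x))"
    using assms by (rule INF_le_SUP)
  finally show ?thesis unfolding hausdorffH_def e1 by (simp add: max_def)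
qed

theorem mainTheorem2:
  fixes G :: "'a::complete_space \<Rightarrow> 'a \<Rightarrow> 'a"
    and T :: "'a \<Rightarrow> 'a set"
    and xs :: 'a
    and k :: real
  assumes G_diag: "\<And>x. G x x = x"
    and G_inj: "\<And>x y. G x y = x \<Longrightarrow> y = x"
    and T_ne: "\<And>x. T x \<noteq> {}"
    and T_closed: "\<And>x. closed (T x)"
    and SFix_ne: "SFix T \<noteq> {}"
    and xs_fix: "xs \<in> SFix T"
    and k_pos: "0 < k" and k_lt1: "k < 1"
    and contr: "\<And>x. hausdorffH (perturb G T x) {xs} \<le> ereal k * ereal (dist x xs)"
  shows "\<forall>Y. Y \<noteq> {} \<and> closed Y \<longrightarrow>
           hausdorffH (perturb_set G T Y) {xs} \<le> ereal k * hausdorffH Y {xs}"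
proof (intro allI impI)
  fix Y :: "'a set"
  assume Y: "Y \<noteq> {} \<and> closed Y"
  have pne: "\<And>y. perturb G T y \<noteq> {}" using T_ne by (auto simp: perturb_def)
  have "perturb_set G T Y \<noteq> {}" using Y pne by (auto simp: perturb_set_def)
  hence "hausdorffH (perturb_set G T Y) {xs} = (SUP z\<in>perturb_set G T Y. ereal (dist z xs))"
    by (rule H_single)
  also have "\<dots> \<le> ereal k * (SUP y\<in>Y. ereal (dist y xs))"
  proof (rule SUP_least)
    fix z assume "z \<in> perturb_set G T Y"
    then obtain y where y: "y \<in> Y" "z \<in> perturb G T y" by (auto simp: perturb_set_def)
    have "ereal (dist z xs) \<le> (SUP z\<in>perturb G T y. ereal (dist z xs))"
      using y(2) by (rule SUP_upper)
    also have "\<dots> = hausdorffH (perturb G T y) {xs}" using H_single[OF pne] by simp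
    also have "\<dots> \<le> ereal k * ereal (dist y xs)" by (rule contr)
    also have "\<dots> \<le> ereal k * (SUP y\<in>Y. ereal (dist y xs))"
      by (rule ereal_mult_left_mono) (use y(1) k_pos in \<open>auto intro: SUP_upper\<close>)
    finally show "ereal (dist z xs) \<le> ereal k * (SUP y\<in>Y. ereal (dist y xs))" .
  qed
  also have "\<dots> = ereal k * hausdorffH Y {xs}" using H_single[of Y xs] Y by simp
  finally show "hausdorffH (perturb_set G T Y) {xs} \<le> ereal k * hausdorffH Y {xs}" .
qed

end
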